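(* For Lebesgue almost all $x\in(0,1)$, $$\liminf_{n\to\infty}\frac{\log R_n(x)-\log n}{\log\log n}=-\infty\quad\text{and}\quad\liminf_{n\to\infty}\frac{\log M_n(x)-\log n}{\log\log n}=0.$$
   Context: Signed Engel expansion: define $T\colon[0,1)\to[0,1)$ by: for $k\in\mathbb{N}$, $Tx=\lceil 1/x\rceil x-1$ if $x\in(\frac{1}{2k},\frac{1}{2k-1})$; $Tx=1-\lfloor 1/x\rfloor x$ if $x\in(\frac{1}{2k+1},\frac{1}{2k})$; $Tx=0$ if $x\in\{0\}\cup\{1/n\colon n\ge 2\}$. For $x\in(0,1)$, $d_1(x)=\lceil 1/x\rceil$ if $x\in[\frac{1}{2k},\frac{1}{2k-1})$ for some $k\in\mathbb{N}$, and $d_1(x)=\lfloor 1/x\rfloor$ if $x\in[\frac{1}{2k+1},\frac{1}{2k})$ for some $k\in\mathbb{N}$; $d_{n+1}(x)=d_1(T^nx)$. For irrational $x\in(0,1)$, $R_1(x)=d_1(x)$, $R_n(x)=d_n(x)/d_{n-1}(x)$ for $n\ge2$, and $M_n(x)=\max\{R_k(x)\colon 1\le k\le n\}$. *)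

theory Defs
  imports "HOL-Analysis.Analysis"
begin

text \<open>The signed Engel map T on [0,1). Outside the two families of open intervals
  (i.e. at 0 and at the points 1/n, n \<ge> 2) it is 0.\<close>
definition sengel_T :: "real \<Rightarrow> real" where
  "sengel_T x =
     (if \<exists>k::nat. k \<ge> 1 \<and> 1 / (2 * real k) < x \<and> x < 1 / (2 * real k - 1)
      then real_of_int (ceiling (1 / x)) * x - 1
      else if \<exists>k::nat. k \<ge> 1 \<and> 1 / (2 * real k + 1) < x \<and> x < 1 / (2 * real k)
      then 1 - real_of_int (floor (1 / x)) * x
      else 0)"

text \<open>First digit d_1 (value 0 outside (0,1), where it is not used).\<close>
definition sengel_d1 :: "real \<Rightarrow> real" where
  "sengel_d1 x =
     (if \<exists>k::nat. k \<ge> 1 \<and> 1 / (2 * real k) \<le> x \<and> x < 1 / (2 * real k - 1)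
      then real_of_int (ceiling (1 / x))
      else if \<exists>k::nat. k \<ge> 1 \<and> 1 / (2 * real k + 1) \<le> x \<and> x < 1 / (2 * real k)
      then real_of_int (floor (1 / x))
      else 0)"

definition sengel_d :: "nat \<Rightarrow> real \<Rightarrow> real" where
  "sengel_d n x = sengel_d1 ((sengel_T ^^ (n - 1)) x)"

definition sengel_R :: "nat \<Rightarrow> real \<Rightarrow> real" where
  "sengel_R n x = (if n \<le> 1 then sengel_d 1 x else sengel_d n x / sengel_d (n - 1) x)"

definition sengel_M :: "nat \<Rightarrow> real \<Rightarrow> real" where
  "sengel_M n x = Max ((\<lambda>k. sengel_R k x) ` {1..n})"

end

theory Submission
  imports Defs "HOL-Real_Asymp.Real_Asymp"
begin


definition sg :: "real \<Rightarrow> real" where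
  "sg y = 2 * real_of_int \<lceil>(1 / y - 1) / 2\<rceil>"

definition stau :: "real \<Rightarrow> real" where
  "stau y = \<bar>sg y * y - 1\<bar>"

definition dig :: "nat \<Rightarrow> real" where
  "dig n = (if odd n then real n + 1 else real n)"

definition jp :: "nat \<Rightarrow> real" where
  "jp n = (if odd n then real n else real n + 1)"

definition aff :: "nat \<Rightarrow> real \<Rightarrow> real" where
  "aff n y = (if odd n then dig n * y - 1 else 1 - dig n * y)"

lemma branch:
  assumes n: "n \<ge> 1" and y: "1 / (real n + 1) < y" "y < 1 / real n"
  shows "sg y = dig n" "stau y = aff n y"
proof -
  have yp: "y > 0" using y(1) by (smt (verit) divide_pos_pos of_nat_0_le_iff)
  have iy: "real n < 1 / y" "1 / y < real n + 1"
    using y yp n by (auto simp: field_simps)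
  show 1: "sg y = dig n"
  proof (cases "odd n")
    case True
    then obtain k where k: "n = 2 * k + 1" by (metis oddE)
    have "\<lceil>(1 / y - 1) / 2\<rceil> = int k + 1"
      using iy unfolding k by (subst ceiling_eq_iff) auto
    then show ?thesis unfolding sg_def dig_def using True k by simp
  next
    case False
    then obtain k where k: "n = 2 * k" by (metis evenE)
    have "\<lceil>(1 / y - 1) / 2\<rceil> = int k"
      using iy unfolding k by (subst ceiling_eq_iff) auto
    then show ?thesis unfolding sg_def dig_def using False k by simp
  qed
  show "stau y = aff n y"
  proof (cases "odd n")
    case True
    have "dig n * y > 1" using True iy yp unfolding dig_def by (simp add: field_simps)
    then show ?thesis unfolding stau_def aff_def 1 using True by simp
  next
    case False
    have "dig n * y < 1" using False iy yp n unfolding dig_def by (simp add: field_simps)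
    then show ?thesis unfolding stau_def aff_def 1 using False by simp
  qed
qed

lemma aff_range:
  assumes n: "n \<ge> 1"
  shows "1 / (real n + 1) < y \<and> y < 1 / real n \<longleftrightarrow> 0 < aff n y \<and> aff n y < 1 / jp n"
proof (cases "odd n")
  case True
  have "1 / (real n + 1) < y \<longleftrightarrow> 0 < (real n + 1) * y - 1"
    by (simp add: field_simps)
  moreover have "y < 1 / real n \<longleftrightarrow> (real n + 1) * y - 1 < 1 / real n"
  proof -
    have rn: "real n > 0" using n by simp
    have "(real n + 1) * y - 1 < 1 / real n \<longleftrightarrow> ((real n + 1) * y - 1) * real n < 1"
      using rn by (rule pos_less_divide_eq)
    also have "((real n + 1) * y - 1) * real n - 1 = (real n + 1) * (y * real n - 1)"
      by (simp add: algebra_simps)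
    then have "((real n + 1) * y - 1) * real n < 1 \<longleftrightarrow> (real n + 1) * (y * real n - 1) < 0"
      by linarith
    also have "\<dots> \<longleftrightarrow> y * real n - 1 < 0" using rn
      by (simp add: mult_less_0_iff)
    also have "\<dots> \<longleftrightarrow> y < 1 / real n" using pos_less_divide_eq[OF rn, of y 1] by linarith
    finally show ?thesis by simp
  qed
  ultimately show ?thesis using True unfolding aff_def dig_def jp_def by simp
next
  case False
  have "y < 1 / real n \<longleftrightarrow> 0 < 1 - real n * y"
    using n by (simp add: field_simps)
  moreover have "1 / (real n + 1) < y \<longleftrightarrow> 1 - real n * y < 1 / (real n + 1)"
  proof -
    have "1 - real n * y < 1 / (real n + 1) \<longleftrightarrow> (1 - real n * y) * (real n + 1) < 1"
      by (simp add: field_simps)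
    also have "\<dots> \<longleftrightarrow> real n * 1 < real n * ((real n + 1) * y)" by (simp add: algebra_simps)
    also have "\<dots> \<longleftrightarrow> 1 < (real n + 1) * y" using n by simp
    also have "\<dots> \<longleftrightarrow> 1 / (real n + 1) < y" by (simp add: field_simps)
    finally show ?thesis by simp
  qed
  ultimately show ?thesis using False unfolding aff_def dig_def jp_def by auto
qed

lemma sengel_branch:
  assumes n: "n \<ge> 1" and y: "1 / (real n + 1) < y" "y < 1 / real n"
  shows "sengel_d1 y = sg y" "sengel_T y = stau y"
proof -
  have yp: "y > 0" using y(1) by (smt (verit) divide_pos_pos of_nat_0_le_iff)
  have iy: "real n < 1 / y" "1 / y < real n + 1"
    using y yp n by (auto simp: field_simps)
  note b = branch[OF assms]
  have "sengel_d1 y = sg y \<and> sengel_T y = stau y"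
  proof (cases "odd n")
    case True
    then obtain k where k: "n = 2 * k + 1" by (metis oddE)
    have c1: "1 / (2 * real (k+1)) < y \<and> y < 1 / (2 * real (k+1) - 1)"
      using y unfolding k by (simp add: field_simps)
    have ce: "\<lceil>1 / y\<rceil> = 2 * int k + 2"
      using iy unfolding k by (subst ceiling_eq_iff) auto
    have "sengel_d1 y = 2 * real k + 2"
      unfolding sengel_d1_def using c1 ce by (subst if_P) (auto intro!: exI[of _ "k+1"])
    moreover have "sengel_T y = (2 * real k + 2) * y - 1"
      unfolding sengel_T_def using c1 ce by (subst if_P) (auto intro!: exI[of _ "k+1"])
    ultimately show ?thesis using b True unfolding aff_def dig_def k by simp
  next
    case False
    then obtain k where k: "n = 2 * k" by (metis evenE)
    have k1: "k \<ge> 1" using n k by simp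
    have c2: "1 / (2 * real k + 1) < y \<and> y < 1 / (2 * real k)"
      using y unfolding k by (simp add: field_simps)
    have nc1: "\<not> (\<exists>k'::nat. k' \<ge> 1 \<and> 1 / (2 * real k') \<le> y \<and> y < 1 / (2 * real k' - 1))"
    proof
      assume "\<exists>k'::nat. k' \<ge> 1 \<and> 1 / (2 * real k') \<le> y \<and> y < 1 / (2 * real k' - 1)"
      then obtain k' :: nat where h: "k' \<ge> 1" "1 / (2 * real k') \<le> y" "y < 1 / (2 * real k' - 1)" by blast
      have "2 * real k' - 1 < 1 / y" using h yp by (simp add: field_simps)
      moreover have "1 / y \<le> 2 * real k'" using h yp by (simp add: field_simps)
      ultimately have "2 * real k' - 1 < 2 * real k + 1" "2 * real k < 2 * real k'"
        using iy unfolding k by auto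
      then have "real k' < real k + 1" "real k < real k'" by linarith+
      then have "k' < k + 1" "k < k'" by (metis of_nat_1 of_nat_add of_nat_less_iff)+
      then show False by linarith
    qed
    have nc1': "\<not> (\<exists>k'::nat. k' \<ge> 1 \<and> 1 / (2 * real k') < y \<and> y < 1 / (2 * real k' - 1))"
      using nc1 by (meson less_imp_le)
    have fl: "\<lfloor>1 / y\<rfloor> = 2 * int k"
      using iy unfolding k by (subst floor_eq_iff) auto
    have "sengel_d1 y = 2 * real k"
      unfolding sengel_d1_def using c2 fl nc1 k1 by (subst if_not_P) (auto intro!: exI[of _ k])
    moreover have "sengel_T y = 1 - (2 * real k) * y"
      unfolding sengel_T_def using c2 fl nc1' k1 by (subst if_not_P) (auto intro!: exI[of _ k])
    ultimately show ?thesis using b False unfolding aff_def dig_def k by simp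
  qed
  then show "sengel_d1 y = sg y" "sengel_T y = stau y" by auto
qed




lemma sg_meas[measurable]: "sg \<in> borel_measurable borel"
  unfolding sg_def by measurable

lemma stau_meas[measurable]: "stau \<in> borel_measurable borel"
  unfolding stau_def by measurable

lemma meas_dep:
  assumes F: "\<And>e. F e \<in> sets borel"
  shows "{y. stau y \<in> F (sg y)} \<in> sets borel"
proof -
  have eq: "{y. stau y \<in> F (sg y)} = (\<Union>k\<in>(UNIV::int set). {y. sg y = real_of_int (2*k)} \<inter> stau -` F (real_of_int (2*k)))"
    unfolding sg_def by auto
  have "\<And>k. {y. sg y = real_of_int (2*k)} \<inter> stau -` F (real_of_int (2*k)) \<in> sets borel"
  proof -
    fix k :: int
    have "{y. sg y = real_of_int (2*k)} \<in> sets borel" by measurable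
    moreover have "stau -` F (real_of_int (2*k)) \<in> sets borel"
      using measurable_sets[OF stau_meas F] by simp
    ultimately show "{y. sg y = real_of_int (2*k)} \<inter> stau -` F (real_of_int (2*k)) \<in> sets borel" by blast
  qed
  then show ?thesis unfolding eq by (intro sets.countable_UN'') auto
qed

lemma affine_pre:
  fixes c t :: real
  assumes c: "c \<noteq> 0" and S: "S \<in> sets borel"
  shows "emeasure lborel S = ennreal \<bar>c\<bar> * emeasure lborel ((\<lambda>x. t + c * x) -` S)"
proof -
  have m: "(\<lambda>x. t + c * x) \<in> borel_measurable borel" by measurable
  have "emeasure lborel S = emeasure (density (distr lborel borel (\<lambda>x. t + c * x)) (\<lambda>_. ennreal \<bar>c\<bar>)) S"
    using lborel_real_affine[OF c, of t] by simp
  also have "\<dots> = (\<integral>\<^sup>+ x. ennreal \<bar>c\<bar> * indicator S x \<partial>(distr lborel borel (\<lambda>x. t + c * x)))"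
    using S by (subst emeasure_density) auto
  also have "\<dots> = ennreal \<bar>c\<bar> * emeasure (distr lborel borel (\<lambda>x. t + c * x)) S"
    using S by (subst nn_integral_cmult_indicator) auto
  also have "\<dots> = ennreal \<bar>c\<bar> * emeasure lborel ((\<lambda>x. t + c * x) -` S)"
    using S m by (subst emeasure_distr) auto
  finally show ?thesis .
qed

definition Ibr :: "nat \<Rightarrow> real set" where
  "Ibr n = {1 / (real n + 1) <..< 1 / real n}"

lemma Ibr_disj: "disjoint_family (\<lambda>i. Ibr (i + j))"
  unfolding disjoint_family_on_def
proof (intro ballI impI)
  fix a b :: nat assume "a \<in> UNIV" "b \<in> UNIV" "a \<noteq> b"
  show "Ibr (a + j) \<inter> Ibr (b + j) = {}"
  proof (rule ccontr)
    assume "Ibr (a + j) \<inter> Ibr (b + j) \<noteq> {}"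
    then obtain y where y: "y \<in> Ibr (a+j)" "y \<in> Ibr (b+j)" by blast
    have yp: "y > 0" using y(1) unfolding Ibr_def by (smt (verit) divide_pos_pos greaterThanLessThan_iff of_nat_0_le_iff)
    have "\<And>n. y \<in> Ibr n \<Longrightarrow> real n < 1 / y \<and> 1 / y < real n + 1"
    proof -
      fix n assume "y \<in> Ibr n"
      then have h: "1 / (real n + 1) < y" "y < 1 / real n" unfolding Ibr_def by auto
      have "1 / y < real n + 1" using h(1) yp by (simp add: field_simps)
      moreover have "real n < 1 / y"
      proof (cases "n = 0")
        case True then show ?thesis using yp by simp
      next
        case False then show ?thesis using h(2) yp by (simp add: field_simps)
      qed
      ultimately show "real n < 1 / y \<and> 1 / y < real n + 1" by simp
    qed
    from this[OF y(1)] this[OF y(2)]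
    have "real (a+j) < real (b+j) + 1" "real (b+j) < real (a+j) + 1" by linarith+
    then have "a + j < b + j + 1" "b + j < a + j + 1" by (metis of_nat_1 of_nat_add of_nat_less_iff)+
    then show False using \<open>a \<noteq> b\<close> by linarith
  qed
qed

lemma cover:
  assumes j: "j \<ge> 1" and y: "0 < y" "y < 1 / real j" and nr: "y \<notin> range (\<lambda>n::nat. 1 / real n)"
  shows "\<exists>i. y \<in> Ibr (i + j)"
proof -
  define n where "n = nat \<lfloor>1 / y\<rfloor>"
  have jy: "real j < 1 / y" using y j by (simp add: field_simps)
  have f0: "0 \<le> \<lfloor>1 / y\<rfloor>" using y by simp
  have rn: "real n = real_of_int \<lfloor>1 / y\<rfloor>" unfolding n_def using f0 by simp
  have fl: "real n \<le> 1 / y" "1 / y < real n + 1" unfolding rn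
    by (rule of_int_floor_le) (rule real_of_int_floor_add_one_gt)
  have "real n \<noteq> 1 / y"
  proof
    assume "real n = 1 / y"
    then have "y = 1 / real n" using y by simp
    then show False using nr by auto
  qed
  then have fl2: "real n < 1 / y" using fl by simp
  have "int j \<le> \<lfloor>1 / y\<rfloor>" using jy by (simp add: le_floor_iff)
  then have jn: "j \<le> n" unfolding n_def by simp
  have n1: "n \<ge> 1" using jn j by simp
  have "y \<in> Ibr n" unfolding Ibr_def using fl(2) fl2 y n1 by (auto simp: field_simps)
  then show ?thesis using jn by (metis le_add_diff_inverse2)
qed

lemma decomp:
  assumes j: "j \<ge> 1" and Z: "Z \<in> sets borel"
  shows "emeasure lborel (Z \<inter> {0<..<1 / real j}) = (\<Sum>i. emeasure lborel (Z \<inter> Ibr (i + j)))"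
proof -
  have sub: "Ibr (i + j) \<subseteq> {0<..<1 / real j}" for i
  proof
    fix y assume "y \<in> Ibr (i + j)"
    then have h: "1 / (real (i+j) + 1) < y" "y < 1 / real (i+j)" unfolding Ibr_def by auto
    have y0: "0 < y" using h(1) by (smt (verit) divide_pos_pos of_nat_0_le_iff)
    have le: "1 / real (i+j) \<le> 1 / real j" using j by (intro divide_left_mono) auto
    have "y < 1 / real j" using less_le_trans[OF h(2) le] .
    then show "y \<in> {0<..<1 / real j}" using y0 by simp
  qed
  let ?C = "Z \<inter> {0<..<1 / real j} \<inter> range (\<lambda>n::nat. 1 / real n)"
  have eq: "Z \<inter> {0<..<1 / real j} = (\<Union>i. Z \<inter> Ibr (i + j)) \<union> ?C"
  proof (intro equalityI subsetI)
    fix y assume y: "y \<in> Z \<inter> {0<..<1 / real j}"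
    show "y \<in> (\<Union>i. Z \<inter> Ibr (i + j)) \<union> ?C"
    proof (cases "y \<in> range (\<lambda>n::nat. 1 / real n)")
      case True then show ?thesis using y by simp
    next
      case False
      then obtain i where "y \<in> Ibr (i + j)" using cover[OF j _ _ False] y by auto
      then show ?thesis using y by auto
    qed
  next
    fix y assume "y \<in> (\<Union>i. Z \<inter> Ibr (i + j)) \<union> ?C"
    then show "y \<in> Z \<inter> {0<..<1 / real j}"
    proof
      assume "y \<in> (\<Union>i. Z \<inter> Ibr (i + j))"
      then obtain i where "y \<in> Z" "y \<in> Ibr (i + j)" by auto
      then show ?thesis using sub[of i] by auto
    qed auto
  qed
  have null: "?C \<in> null_sets lborel"
    by (rule countable_imp_null_set_lborel, rule countable_subset[of _ "range (\<lambda>n::nat. 1 / real n)"]) auto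
  have ib: "Ibr k \<in> sets borel" for k unfolding Ibr_def by simp
  have ms: "range (\<lambda>i. Z \<inter> Ibr (i + j)) \<subseteq> sets lborel"
  proof (intro image_subsetI)
    fix i show "Z \<inter> Ibr (i + j) \<in> sets lborel" using Z ib[of "i+j"] by (simp add: sets.Int)
  qed
  have "emeasure lborel (Z \<inter> {0<..<1 / real j}) = emeasure lborel ((\<Union>i. Z \<inter> Ibr (i + j)) \<union> ?C)"
    by (rule arg_cong[OF eq])
  also have "\<dots> = emeasure lborel (\<Union>i. Z \<inter> Ibr (i + j))"
    using sets.countable_UN[OF ms] null by (rule emeasure_Un_null_set)
  finally have E1: "emeasure lborel (Z \<inter> {0<..<1 / real j}) = emeasure lborel (\<Union>i. Z \<inter> Ibr (i + j))" .
  have D: "disjoint_family (\<lambda>i. Z \<inter> Ibr (i + j))"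
    by (rule disjoint_family_on_bisimulation[OF Ibr_disj[of j]]) auto
  have "emeasure lborel (\<Union>i. Z \<inter> Ibr (i + j)) = (\<Sum>i. emeasure lborel (Z \<inter> Ibr (i + j)))"
    by (rule suminf_emeasure[OF ms D, symmetric])
  then show ?thesis using E1 by simp
qed




lemma dig_ge: assumes "n \<ge> 1" shows "dig n \<ge> 2"
proof (cases "odd n")
  case True then show ?thesis using assms by (simp add: dig_def)
next
  case False
  then have "n \<noteq> 1" by auto
  then have "n \<ge> 2" using assms by simp
  then show ?thesis using False by (simp add: dig_def)
qed

lemma jp_ge: "n \<ge> 1 \<Longrightarrow> jp n \<ge> 1"
  unfolding jp_def by auto

lemma dig_jp: "dig n * jp n = real n * (real n + 1)"
  unfolding dig_def jp_def by (auto simp: algebra_simps)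

lemma jp_dig: "n \<ge> 1 \<Longrightarrow> dig n - 1 \<le> jp n \<and> jp n \<le> dig n + 1"
  unfolding dig_def jp_def by auto

lemma emeasure_Ibr: "n \<ge> 1 \<Longrightarrow> emeasure lborel (Ibr n) = ennreal (1 / (dig n * jp n))"
proof -
  assume n: "n \<ge> 1"
  have le: "1 / (real n + 1) \<le> 1 / real n" using n by (intro divide_left_mono) auto
  have "1 / real n - 1 / (real n + 1) = 1 / (real n * (real n + 1))"
    using n by (simp add: field_simps)
  then show ?thesis unfolding Ibr_def dig_jp using emeasure_lborel_Ioo[OF le] by simp
qed

definition a0 :: "nat \<Rightarrow> real" where "a0 n = (if odd n then -1 else 1)"
definition c0 :: "nat \<Rightarrow> real" where "c0 n = (if odd n then dig n else - dig n)"

lemma aff_lin: "aff n y = a0 n + c0 n * y"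
  unfolding aff_def a0_def c0_def by auto

lemma abs_c0: "n \<ge> 1 \<Longrightarrow> \<bar>c0 n\<bar> = dig n"
  using dig_ge[of n] unfolding c0_def by auto

lemma K:
  fixes j :: nat and p :: real and A :: "real set" and F :: "real \<Rightarrow> real set"
  assumes j: "j \<ge> 1" and p: "p \<ge> 0" and A: "A \<in> sets borel" and F: "\<And>e. F e \<in> sets borel"
    and hyp: "\<And>n. n \<ge> 1 \<Longrightarrow> dig n \<in> A \<Longrightarrow>
       emeasure lborel (F (dig n) \<inter> {0<..<1 / jp n}) \<le> ennreal (p / jp n)"
  shows "emeasure lborel {y\<in>{0<..<1 / real j}. sg y \<in> A \<and> stau y \<in> F (sg y)}
         \<le> ennreal p * emeasure lborel {y\<in>{0<..<1 / real j}. sg y \<in> A}"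
proof -
  define X where "X = {y. sg y \<in> A \<and> stau y \<in> F (sg y)}"
  define Y where "Y = {y. sg y \<in> A}"
  have Ym: "Y \<in> sets borel" unfolding Y_def using measurable_sets[OF sg_meas A] by (simp add: vimage_def)
  have "X = Y \<inter> {y. stau y \<in> F (sg y)}" unfolding X_def Y_def by auto
  then have Xm: "X \<in> sets borel" using Ym meas_dep[OF F] by (simp add: sets.Int)
  have eqX: "{y\<in>{0<..<1 / real j}. sg y \<in> A \<and> stau y \<in> F (sg y)} = X \<inter> {0<..<1 / real j}"
    unfolding X_def by auto
  have eqY: "{y\<in>{0<..<1 / real j}. sg y \<in> A} = Y \<inter> {0<..<1 / real j}"
    unfolding Y_def by auto
  have trm: "emeasure lborel (X \<inter> Ibr n) \<le> ennreal p * emeasure lborel (Y \<inter> Ibr n)" if n: "n \<ge> 1" for n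
  proof (cases "dig n \<in> A")
    case False
    have "X \<inter> Ibr n = {}"
    proof (rule ccontr)
      assume "X \<inter> Ibr n \<noteq> {}"
      then obtain y where y: "y \<in> X" "y \<in> Ibr n" by blast
      have "sg y = dig n" using branch(1)[OF n] y(2) unfolding Ibr_def by auto
      then show False using y(1) False unfolding X_def by auto
    qed
    then show ?thesis by simp
  next
    case True
    have Yn: "Y \<inter> Ibr n = Ibr n"
    proof -
      have "y \<in> Y" if "y \<in> Ibr n" for y
      proof -
        have "sg y = dig n" using branch(1)[OF n] that unfolding Ibr_def by auto
        then show ?thesis using True unfolding Y_def by auto
      qed
      then show ?thesis by blast
    qed
    define G where "G = F (dig n) \<inter> {0<..<1 / jp n}"
    have Gm: "G \<in> sets borel" unfolding G_def using F by simp
    have Xn: "X \<inter> Ibr n = (\<lambda>y. a0 n + c0 n * y) -` G"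
    proof (intro equalityI subsetI)
      fix y assume y: "y \<in> X \<inter> Ibr n"
      then have yi: "1 / (real n + 1) < y" "y < 1 / real n" unfolding Ibr_def by auto
      have "sg y = dig n" "stau y = aff n y" using branch[OF n yi] by auto
      moreover have "0 < aff n y \<and> aff n y < 1 / jp n" using aff_range[OF n] yi by blast
      ultimately show "y \<in> (\<lambda>y. a0 n + c0 n * y) -` G"
        using y unfolding X_def G_def aff_lin by auto
    next
      fix y assume y: "y \<in> (\<lambda>y. a0 n + c0 n * y) -` G"
      then have "0 < aff n y \<and> aff n y < 1 / jp n" unfolding G_def aff_lin by auto
      then have yi: "1 / (real n + 1) < y" "y < 1 / real n" using aff_range[OF n] by blast+
      have "sg y = dig n" "stau y = aff n y" using branch[OF n yi] by auto
      then show "y \<in> X \<inter> Ibr n"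
        using y yi True unfolding X_def G_def aff_lin Ibr_def by auto
    qed
    have c0nz: "c0 n \<noteq> 0" using abs_c0[OF n] dig_ge[OF n] by auto
    have "emeasure lborel G = ennreal (dig n) * emeasure lborel (X \<inter> Ibr n)"
      using affine_pre[OF c0nz Gm, of "a0 n"] unfolding Xn abs_c0[OF n] .
    moreover have "emeasure lborel G \<le> ennreal (p / jp n)" unfolding G_def using hyp[OF n True] .
    ultimately have le1: "ennreal (dig n) * emeasure lborel (X \<inter> Ibr n) \<le> ennreal (p / jp n)" by simp
    have dpos: "dig n > 0" using dig_ge[OF n] by simp
    have jpos: "jp n > 0" using jp_ge[OF n] by simp
    have "emeasure lborel (X \<inter> Ibr n) = ennreal (1 / dig n) * (ennreal (dig n) * emeasure lborel (X \<inter> Ibr n))"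
    proof -
      have "ennreal (1 / dig n) * ennreal (dig n) = 1"
        using dpos by (simp add: ennreal_mult'[symmetric])
      then show ?thesis by (simp add: mult.assoc[symmetric])
    qed
    also have "\<dots> \<le> ennreal (1 / dig n) * ennreal (p / jp n)"
      by (rule mult_left_mono[OF le1]) simp
    also have "\<dots> = ennreal (p * (1 / (dig n * jp n)))"
      using dpos jpos p by (simp add: ennreal_mult'[symmetric])
    also have "\<dots> = ennreal p * emeasure lborel (Y \<inter> Ibr n)"
    proof -
      have "ennreal (p * (1 / (dig n * jp n))) = ennreal p * ennreal (1 / (dig n * jp n))"
        using p dpos jpos by (intro ennreal_mult) auto
      then show ?thesis unfolding Yn emeasure_Ibr[OF n] .
    qed
    finally show ?thesis .
  qed
  have "emeasure lborel (X \<inter> {0<..<1 / real j}) = (\<Sum>i. emeasure lborel (X \<inter> Ibr (i + j)))"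
    by (rule decomp[OF j Xm])
  also have "\<dots> \<le> (\<Sum>i. ennreal p * emeasure lborel (Y \<inter> Ibr (i + j)))"
    by (rule suminf_le) (use trm j in auto)
  also have "\<dots> = ennreal p * (\<Sum>i. emeasure lborel (Y \<inter> Ibr (i + j)))"
    by (rule ennreal_suminf_cmult)
  also have "\<dots> = ennreal p * emeasure lborel (Y \<inter> {0<..<1 / real j})"
    using decomp[OF j Ym] by simp
  finally show ?thesis unfolding eqX eqY .
qed




lemma ceil2: fixes u :: real shows "u \<le> 2 * real_of_int \<lceil>u / 2\<rceil>" "2 * real_of_int \<lceil>u / 2\<rceil> < u + 2"
proof -
  have "u / 2 \<le> real_of_int \<lceil>u / 2\<rceil>" by (rule le_of_int_ceiling)
  then show "u \<le> 2 * real_of_int \<lceil>u / 2\<rceil>" by linarith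
  have "real_of_int \<lceil>u / 2\<rceil> < u / 2 + 1" using ceiling_correct[of "u / 2"] by linarith
  then show "2 * real_of_int \<lceil>u / 2\<rceil> < u + 2" by linarith
qed

lemma sg_ge: "1 / y - 1 \<le> sg y"
  unfolding sg_def using ceil2(1)[of "1 / y - 1"] .

lemma sg_lt: "sg y < 1 / y + 1"
  unfolding sg_def using ceil2(2)[of "1 / y - 1"] by simp

definition jpn :: "nat \<Rightarrow> nat" where "jpn n = (if odd n then n else n + 1)"

lemma jp_nat: "jp n = real (jpn n)"
  unfolding jp_def jpn_def by auto

lemma jpn_ge: "n \<ge> 1 \<Longrightarrow> jpn n \<ge> 1"
  unfolding jpn_def by auto

lemma stau_pow_meas[measurable]: "(stau ^^ m) \<in> borel_measurable borel"
proof (induction m)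
  case 0 then show ?case by simp
next
  case (Suc m)
  have "(stau ^^ Suc m) = stau \<circ> (stau ^^ m)" by simp
  then show ?case using Suc measurable_comp[OF Suc stau_meas] by simp
qed

lemma em_Ioo0: "emeasure lborel {y\<in>{0<..<1 / real j}. sg y \<in> UNIV} = ennreal (1 / real j)"
proof -
  have "{y\<in>{0<..<1 / real j}. sg y \<in> UNIV} = {0<..<1 / real j}" by auto
  then show ?thesis by simp
qed

lemma ennreal_mult_div: "a \<ge> 0 \<Longrightarrow> b \<ge> 0 \<Longrightarrow> ennreal a * ennreal (1 / b) = ennreal (a / b)"
  by (subst ennreal_mult[symmetric]) auto

definition Ht :: "real \<Rightarrow> real set" where
  "Ht t = {y. t * sg y < sg (stau y)}"

lemma Ht_meas: "Ht t \<in> sets borel"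
proof -
  have eq: "Ht t = {y. stau y \<in> (\<lambda>e. {z. t * e < sg z}) (sg y)}" unfolding Ht_def by auto
  have "{y. stau y \<in> (\<lambda>e. {z. t * e < sg z}) (sg y)} \<in> sets borel"
    by (rule meas_dep) measurable
  then show ?thesis unfolding eq .
qed

lemma tail_hyp:
  assumes t: "t \<ge> 1" and n: "n \<ge> 1"
  shows "emeasure lborel ({z. t * dig n < sg z} \<inter> {0<..<1 / jp n}) \<le> ennreal (3 / t / jp n)"
proof -
  have d: "dig n \<ge> 2" using dig_ge[OF n] .
  have jj: "jp n \<le> dig n + 1" "jp n \<ge> 1" using jp_dig[OF n] jp_ge[OF n] by auto
  have "1 * 2 \<le> t * dig n" using t d by (intro mult_mono) auto
  then have td: "t * dig n - 1 > 0" by linarith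
  have sub: "{z. t * dig n < sg z} \<inter> {0<..<1 / jp n} \<subseteq> {0<..<1 / (t * dig n - 1)}"
  proof
    fix z assume z: "z \<in> {z. t * dig n < sg z} \<inter> {0<..<1 / jp n}"
    then have zp: "z > 0" by auto
    have "t * dig n < 1 / z + 1" using z sg_lt[of z] by auto
    then have "t * dig n - 1 < 1 / z" by linarith
    then have "z < 1 / (t * dig n - 1)" using zp td by (simp add: field_simps)
    then show "z \<in> {0<..<1 / (t * dig n - 1)}" using zp by auto
  qed
  have "emeasure lborel ({z. t * dig n < sg z} \<inter> {0<..<1 / jp n}) \<le> emeasure lborel {0<..<1 / (t * dig n - 1)}"
    by (rule emeasure_mono[OF sub]) simp
  also have "\<dots> = ennreal (1 / (t * dig n - 1))" using td by simp
  also have "\<dots> \<le> ennreal (3 / t / jp n)"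
  proof (rule ennreal_leI)
    have "t * (dig n + 1) \<le> 3 * (t * dig n - 1)"
    proof -
      have "t * 2 \<le> t * dig n" using d t by simp
      moreover have "t * (dig n + 1) = t * dig n + t" by (simp add: algebra_simps)
      ultimately show ?thesis using t by (smt (verit))
    qed
    moreover have "t * jp n \<le> t * (dig n + 1)" using jj t by simp
    ultimately have "t * jp n \<le> 3 * (t * dig n - 1)" by linarith
    then show "1 / (t * dig n - 1) \<le> 3 / t / jp n"
      using td t jj by (simp add: field_simps)
  qed
  finally show ?thesis .
qed

lemma tail_bound:
  assumes t: "t \<ge> 1" and j: "j \<ge> 1"
  shows "emeasure lborel {y\<in>{0<..<1 / real j}. (stau ^^ m) y \<in> Ht t} \<le> ennreal (3 / t / real j)"
  using j
proof (induction m arbitrary: j)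
  case 0
  have eq: "{y\<in>{0<..<1 / real j}. (stau ^^ 0) y \<in> Ht t} =
      {y\<in>{0<..<1 / real j}. sg y \<in> UNIV \<and> stau y \<in> (\<lambda>e. {z. t * e < sg z}) (sg y)}"
    unfolding Ht_def by auto
  have "emeasure lborel {y\<in>{0<..<1 / real j}. (stau ^^ 0) y \<in> Ht t}
      \<le> ennreal (3 / t) * emeasure lborel {y\<in>{0<..<1 / real j}. sg y \<in> UNIV}"
    unfolding eq
  proof (rule K[OF 0(1)])
    show "0 \<le> 3 / t" using t by simp
    show "\<And>e. {z. t * e < sg z} \<in> sets borel" by measurable
    show "\<And>n. 1 \<le> n \<Longrightarrow> dig n \<in> UNIV \<Longrightarrow>
         emeasure lborel ({z. t * dig n < sg z} \<inter> {0<..<1 / jp n}) \<le> ennreal (3 / t / jp n)"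
      using tail_hyp[OF t] by blast
  qed simp
  also have "\<dots> = ennreal (3 / t / real j)"
    unfolding em_Ioo0 using t by (intro ennreal_mult_div) auto
  finally show ?case .
next
  case (Suc m)
  have eq: "{y\<in>{0<..<1 / real j}. (stau ^^ Suc m) y \<in> Ht t} =
      {y\<in>{0<..<1 / real j}. sg y \<in> UNIV \<and> stau y \<in> (\<lambda>e. {z. (stau ^^ m) z \<in> Ht t}) (sg y)}"
    by (auto simp: funpow_Suc_right simp del: funpow.simps)
  have meas: "{z. (stau ^^ m) z \<in> Ht t} \<in> sets borel"
    using measurable_sets[OF stau_pow_meas Ht_meas] by (simp add: vimage_def)
  have "emeasure lborel {y\<in>{0<..<1 / real j}. (stau ^^ Suc m) y \<in> Ht t}
      \<le> ennreal (3 / t) * emeasure lborel {y\<in>{0<..<1 / real j}. sg y \<in> UNIV}"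
    unfolding eq
  proof (rule K[OF Suc(2)])
    show "0 \<le> 3 / t" using t by simp
    show "\<And>e. {z. (stau ^^ m) z \<in> Ht t} \<in> sets borel" using meas .
    fix n :: nat assume n: "1 \<le> n"
    have "emeasure lborel {y\<in>{0<..<1 / real (jpn n)}. (stau ^^ m) y \<in> Ht t} \<le> ennreal (3 / t / real (jpn n))"
      using Suc(1)[OF jpn_ge[OF n]] .
    moreover have "{z. (stau ^^ m) z \<in> Ht t} \<inter> {0<..<1 / jp n} = {y\<in>{0<..<1 / real (jpn n)}. (stau ^^ m) y \<in> Ht t}"
      unfolding jp_nat by auto
    ultimately show "emeasure lborel ({z. (stau ^^ m) z \<in> Ht t} \<inter> {0<..<1 / jp n}) \<le> ennreal (3 / t / jp n)"
      unfolding jp_nat by simp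
  qed simp
  also have "\<dots> = ennreal (3 / t / real j)"
    unfolding em_Ioo0 using t by (intro ennreal_mult_div) auto
  finally show ?case .
qed




primrec Ech :: "real \<Rightarrow> nat \<Rightarrow> real \<Rightarrow> real set" where
  "Ech m 0 d = UNIV"
| "Ech m (Suc k) d = {y. sg y < m * d \<and> stau y \<in> Ech m k (sg y)}"

lemma Ech_meas: "Ech m k d \<in> sets borel"
proof (induction k arbitrary: d)
  case 0 then show ?case by simp
next
  case (Suc k)
  have eq: "Ech m (Suc k) d = {y. sg y < m * d} \<inter> {y. stau y \<in> Ech m k (sg y)}" by auto
  have "{y. sg y < m * d} \<in> sets borel" by measurable
  moreover have "{y. stau y \<in> Ech m k (sg y)} \<in> sets borel" by (rule meas_dep) (rule Suc)
  ultimately show ?case unfolding eq by (rule sets.Int)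
qed

lemma L_small:
  assumes m: "m \<ge> 1" and n: "n \<ge> 1"
  shows "emeasure lborel {y\<in>{0<..<1 / real (jpn n)}. sg y \<in> {e. e < m * dig n}} \<le> ennreal ((1 - 1 / (3 * m)) / jp n)"
proof -
  have d: "dig n \<ge> 2" using dig_ge[OF n] .
  have jj: "dig n - 1 \<le> jp n" "jp n \<le> dig n + 1" "jp n \<ge> 1" using jp_dig[OF n] jp_ge[OF n] by auto
  have md: "m * dig n \<ge> dig n" using m d by simp
  have md1: "m * dig n + 1 > 0" using md d by linarith
  have sub: "{y\<in>{0<..<1 / real (jpn n)}. sg y \<in> {e. e < m * dig n}} \<subseteq> {1 / (m * dig n + 1)<..<1 / jp n}"
  proof
    fix y assume y: "y \<in> {y\<in>{0<..<1 / real (jpn n)}. sg y \<in> {e. e < m * dig n}}"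
    then have yp: "y > 0" and y1: "y < 1 / jp n" and ys: "sg y < m * dig n" unfolding jp_nat by auto
    have "1 / y < m * dig n + 1" using sg_ge[of y] ys by linarith
    then have "1 / (m * dig n + 1) < y" using yp md1 by (simp add: field_simps)
    then show "y \<in> {1 / (m * dig n + 1)<..<1 / jp n}" using y1 by simp
  qed
  have le: "1 / (m * dig n + 1) \<le> 1 / jp n"
    using jj md by (intro divide_left_mono) auto
  have "emeasure lborel {y\<in>{0<..<1 / real (jpn n)}. sg y \<in> {e. e < m * dig n}} \<le> emeasure lborel {1 / (m * dig n + 1)<..<1 / jp n}"
    by (rule emeasure_mono[OF sub]) simp
  also have "\<dots> = ennreal (1 / jp n - 1 / (m * dig n + 1))" using le by simp
  also have "\<dots> \<le> ennreal ((1 - 1 / (3 * m)) / jp n)"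
  proof (rule ennreal_leI)
    have "3 * m * jp n \<ge> 3 * m * (dig n - 1)" using jj m by simp
    moreover have "3 * m * (dig n - 1) = m * dig n + m * (2 * dig n - 3)" by (simp add: algebra_simps)
    moreover have "m * (2 * dig n - 3) \<ge> 1 * 1" using m d by (intro mult_mono) auto
    ultimately have key: "m * dig n + 1 \<le> 3 * m * jp n" by linarith
    have "1 / (3 * m * jp n) \<le> 1 / (m * dig n + 1)"
      using key md1 by (intro divide_left_mono) auto
    moreover have "(1 - 1 / (3 * m)) / jp n = 1 / jp n - 1 / (3 * m * jp n)"
      using m jj by (simp add: field_simps)
    ultimately show "1 / jp n - 1 / (m * dig n + 1) \<le> (1 - 1 / (3 * m)) / jp n" by linarith
  qed
  finally show ?thesis .
qed

lemma q_nonneg: "(m::real) \<ge> 1 \<Longrightarrow> 0 \<le> 1 - 1 / (3 * m)"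
  by (simp add: field_simps)

lemma B_bound:
  assumes m: "m \<ge> 1" and n: "n \<ge> 1"
  shows "emeasure lborel (Ech m k (dig n) \<inter> {0<..<1 / jp n}) \<le> ennreal ((1 - 1 / (3 * m)) ^ k / jp n)"
  using n
proof (induction k arbitrary: n)
  case 0
  have "0 \<le> 1 / jp n" using jp_ge[OF 0(1)] by simp
  then show ?case by simp
next
  case (Suc k)
  let ?q = "1 - 1 / (3 * m)"
  have q0: "0 \<le> ?q" using q_nonneg[OF m] .
  have eq: "Ech m (Suc k) (dig n) \<inter> {0<..<1 / jp n} =
     {y\<in>{0<..<1 / real (jpn n)}. sg y \<in> {e. e < m * dig n} \<and> stau y \<in> Ech m k (sg y)}"
    unfolding jp_nat by auto
  have "emeasure lborel (Ech m (Suc k) (dig n) \<inter> {0<..<1 / jp n})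
      \<le> ennreal (?q ^ k) * emeasure lborel {y\<in>{0<..<1 / real (jpn n)}. sg y \<in> {e. e < m * dig n}}"
    unfolding eq
  proof (rule K[OF jpn_ge[OF Suc(2)]])
    show "0 \<le> ?q ^ k" using q0 by simp
    show "{e. e < m * dig n} \<in> sets borel" by measurable
    show "\<And>e. Ech m k e \<in> sets borel" by (rule Ech_meas)
    show "\<And>n'. 1 \<le> n' \<Longrightarrow> dig n' \<in> {e. e < m * dig n} \<Longrightarrow>
         emeasure lborel (Ech m k (dig n') \<inter> {0<..<1 / jp n'}) \<le> ennreal (?q ^ k / jp n')"
      using Suc(1) by blast
  qed
  also have "\<dots> \<le> ennreal (?q ^ k) * ennreal (?q / jp n)"
    by (rule mult_left_mono[OF L_small[OF m Suc(2)]]) simp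
  also have "\<dots> = ennreal (?q ^ Suc k / jp n)"
    using q0 jp_ge[OF Suc(2)] by (subst ennreal_mult[symmetric]) (auto simp: field_simps)
  finally show ?case .
qed

lemma B_main:
  assumes m: "m \<ge> 1"
  shows "emeasure lborel {y\<in>{0<..<1}. stau y \<in> Ech m k (sg y)} \<le> ennreal ((1 - 1 / (3 * m)) ^ k)"
proof -
  have q0: "0 \<le> 1 - 1 / (3 * m)" using q_nonneg[OF m] .
  have eq: "{y\<in>{0<..<1}. stau y \<in> Ech m k (sg y)} = {y\<in>{0<..<1 / real 1}. sg y \<in> UNIV \<and> stau y \<in> Ech m k (sg y)}"
    by simp
  have "emeasure lborel {y\<in>{0<..<1}. stau y \<in> Ech m k (sg y)}
     \<le> ennreal ((1 - 1 / (3 * m)) ^ k) * emeasure lborel {y\<in>{0<..<1 / real 1}. sg y \<in> UNIV}"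
    unfolding eq
  proof (rule K)
    show "0 \<le> (1 - 1 / (3 * m)) ^ k" using q0 by simp
    show "\<And>e. Ech m k e \<in> sets borel" by (rule Ech_meas)
    show "\<And>n'. 1 \<le> n' \<Longrightarrow> dig n' \<in> UNIV \<Longrightarrow>
         emeasure lborel (Ech m k (dig n') \<inter> {0<..<1 / jp n'}) \<le> ennreal ((1 - 1 / (3 * m)) ^ k / jp n')"
      using B_bound[OF m] by blast
  qed auto
  then show ?thesis unfolding em_Ioo0 by simp
qed

lemma chain_imp:
  "(\<forall>i<k. sg ((stau ^^ Suc i) x) < m * sg ((stau ^^ i) x)) \<Longrightarrow> stau x \<in> Ech m k (sg x)"
proof (induction k arbitrary: x)
  case 0 then show ?case by simp
next
  case (Suc k)
  have h0: "sg (stau x) < m * sg x" using spec[OF Suc(2), of 0] by simp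
  have "\<forall>i<k. sg ((stau ^^ Suc i) (stau x)) < m * sg ((stau ^^ i) (stau x))"
  proof (intro allI impI)
    fix i assume "i < k"
    then have "sg ((stau ^^ Suc (Suc i)) x) < m * sg ((stau ^^ Suc i) x)" using Suc(2) by auto
    then show "sg ((stau ^^ Suc i) (stau x)) < m * sg ((stau ^^ i) (stau x))"
      by (simp only: funpow_Suc_right o_apply)
  qed
  then have "stau (stau x) \<in> Ech m k (sg (stau x))" by (rule Suc(1))
  then show ?case using h0 by simp
qed




definition Om :: "real set" where "Om = {0<..<1} - \<rat>"

lemma om_branch:
  assumes y: "y \<in> Om"
  shows "\<exists>n\<ge>1. 1 / (real n + 1) < y \<and> y < 1 / real n"
proof -
  have y0: "0 < y" "y < 1 / real (1::nat)" "y \<notin> \<rat>" using y unfolding Om_def by auto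
  have "y \<notin> range (\<lambda>n::nat. 1 / real n)" using y0(3) by auto
  then obtain i where "y \<in> Ibr (i + 1)" using cover[of 1 y] y0 by auto
  then show ?thesis unfolding Ibr_def by (intro exI[of _ "i+1"]) auto
qed

lemma om_step:
  assumes y: "y \<in> Om"
  shows "stau y \<in> Om \<and> sengel_d1 y = sg y \<and> sengel_T y = stau y \<and> sg y \<ge> 2"
proof -
  obtain n where n: "n \<ge> 1" and yi: "1 / (real n + 1) < y" "y < 1 / real n" using om_branch[OF y] by blast
  have b: "sg y = dig n" "stau y = aff n y" using branch[OF n yi] by auto
  have s: "sengel_d1 y = sg y" "sengel_T y = stau y" using sengel_branch[OF n yi] by auto
  have r: "0 < aff n y \<and> aff n y < 1 / jp n" using aff_range[OF n] yi by blast
  have "1 / jp n \<le> 1" using jp_ge[OF n] by simp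
  then have r1: "0 < stau y" "stau y < 1" using r b by auto
  have "stau y \<notin> \<rat>"
  proof
    assume "stau y \<in> \<rat>"
    then have q: "a0 n + c0 n * y \<in> \<rat>" using b aff_lin by simp
    have c0q: "c0 n \<in> \<rat>" "a0 n \<in> \<rat>" unfolding c0_def a0_def dig_def by auto
    have c0nz: "c0 n \<noteq> 0" using abs_c0[OF n] dig_ge[OF n] by auto
    have "y = (a0 n + c0 n * y - a0 n) / c0 n" using c0nz by simp
    also have "\<dots> \<in> \<rat>" using q c0q by (intro Rats_divide Rats_diff) auto
    finally show False using y unfolding Om_def by auto
  qed
  then have "stau y \<in> Om" using r1 unfolding Om_def by auto
  then show ?thesis using s b dig_ge[OF n] by simp
qed

lemma om_iter:
  assumes x: "x \<in> Om"
  shows "(stau ^^ k) x \<in> Om \<and> (sengel_T ^^ k) x = (stau ^^ k) x"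
proof (induction k)
  case 0 then show ?case using x by simp
next
  case (Suc k)
  then show ?case using om_step[of "(stau ^^ k) x"] by simp
qed

lemma sengel_d_om: "x \<in> Om \<Longrightarrow> sengel_d k x = sg ((stau ^^ (k - 1)) x)"
  unfolding sengel_d_def using om_iter[of x "k - 1"] om_step[of "(stau ^^ (k - 1)) x"] by simp

lemma sg_om: "x \<in> Om \<Longrightarrow> sg ((stau ^^ k) x) \<ge> 2"
  using om_iter[of x k] om_step[of "(stau ^^ k) x"] by simp

lemma sengel_R_om:
  assumes x: "x \<in> Om"
  shows "sengel_R n x = (if n \<le> 1 then sg x else sg ((stau ^^ (n - 1)) x) / sg ((stau ^^ (n - 2)) x))"
proof (cases "n \<le> 1")
  case True then show ?thesis unfolding sengel_R_def using sengel_d_om[OF x, of 1] by simp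
next
  case False
  then have "n - 1 - 1 = n - 2" by simp
  then show ?thesis unfolding sengel_R_def using False sengel_d_om[OF x, of n] sengel_d_om[OF x, of "n - 1"] by simp
qed

lemma sg_om_pos: "x \<in> Om \<Longrightarrow> sg ((stau ^^ k) x) > 0"
  using sg_om[of x k] by linarith

lemma sengel_R_pos: "x \<in> Om \<Longrightarrow> sengel_R n x > 0"
  using sengel_R_om[of x n] sg_om_pos[of x] sg_om_pos[of x 0] by (auto intro!: divide_pos_pos)




lemma lim1: "filterlim (\<lambda>N::nat. (ln (sqrt (real N)) - ln (real N)) / ln (ln (real N))) at_bot sequentially"
  by real_asymp
lemma lim5: "(\<lambda>k::nat. 3 / sqrt (real k + 2)) \<longlonglongrightarrow> 0"
  by real_asymp

lemma freq_AE:
  fixes B :: "nat \<Rightarrow> real set" and b :: "nat \<Rightarrow> real"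
  assumes meas: "\<And>k. B k \<in> sets borel"
    and bnd: "eventually (\<lambda>k. emeasure lborel (B k) \<le> ennreal (b k)) sequentially"
    and lim: "b \<longlonglongrightarrow> 0"
  shows "AE x in lborel. \<exists>\<^sub>F k in sequentially. x \<notin> B k"
proof -
  define Z where "Z = (\<Union>N. \<Inter>k\<in>{N..}. B k)"
  have Zi: "(\<Inter>k\<in>{N..}. B k) \<in> null_sets lborel" for N
  proof -
    have ms: "(\<Inter>k\<in>{N..}. B k) \<in> sets lborel"
      using meas by (intro sets.countable_INT) auto
    have "emeasure lborel (\<Inter>k\<in>{N..}. B k) \<le> 0"
    proof (rule tendsto_le[OF sequentially_bot])
      show "(\<lambda>k. ennreal (b k)) \<longlonglongrightarrow> 0" using tendsto_ennrealI[OF lim] by simp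
      show "(\<lambda>k. emeasure lborel (\<Inter>k\<in>{N..}. B k)) \<longlonglongrightarrow> emeasure lborel (\<Inter>k\<in>{N..}. B k)" by simp
      show "eventually (\<lambda>k. emeasure lborel (\<Inter>k\<in>{N..}. B k) \<le> ennreal (b k)) sequentially"
        using bnd eventually_ge_at_top[of N]
      proof eventually_elim
        case (elim k)
        have "emeasure lborel (\<Inter>k\<in>{N..}. B k) \<le> emeasure lborel (B k)"
          by (rule emeasure_mono) (use elim meas in auto)
        then show ?case using elim by simp
      qed
    qed
    then show ?thesis using ms by (simp add: null_sets_def)
  qed
  have "Z \<in> null_sets lborel" unfolding Z_def using Zi by blast
  then show ?thesis
  proof (rule AE_I')
    show "{x \<in> space lborel. \<not> (\<exists>\<^sub>F k in sequentially. x \<notin> B k)} \<subseteq> Z"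
      unfolding Z_def not_frequently eventually_sequentially by auto
  qed
qed

lemma liminf_le_lim:
  fixes a c :: "nat \<Rightarrow> ereal"
  assumes freq: "\<forall>M. \<exists>n\<ge>M. a n \<le> c n" and lim: "c \<longlonglongrightarrow> L"
  shows "liminf a \<le> L"
proof (rule ccontr)
  assume "\<not> liminf a \<le> L"
  then have "L < liminf a" by simp
  then obtain y where y: "L < y" "y < liminf a" using dense by blast
  have e1: "eventually (\<lambda>n. y < a n) sequentially"
    using y(2) le_Liminf_iff[of "liminf a" sequentially a] by auto
  have e2: "eventually (\<lambda>n. c n < y) sequentially" using order_tendstoD(2)[OF lim y(1)] .
  have "eventually (\<lambda>n. c n < a n) sequentially" using e1 e2 by eventually_elim auto
  then obtain M where "\<forall>n\<ge>M. c n < a n" unfolding eventually_sequentially by blast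
  then show False using freq by (meson leD)
qed

lemma om_01: "x \<in> Om \<Longrightarrow> x \<in> {0<..<1}"
  unfolding Om_def by auto

lemma lnln_pos: "n \<ge> 4 \<Longrightarrow> ln (ln (real n)) > 0"
proof -
  assume n: "n \<ge> 4"
  have "exp 1 < (4::real)" using exp_le by linarith
  then have "exp 1 < real n" using n by linarith
  then have "1 < ln (real n)" using n by (metis exp_gt_zero less_trans ln_exp ln_less_cancel_iff)
  then show ?thesis by simp
qed

lemma partI: "AE x in lborel. x \<in> Om \<longrightarrow>
   liminf (\<lambda>n. ereal ((ln (sengel_R n x) - ln (real n)) / ln (ln (real n)))) = -\<infinity>"
proof -
  define B where "B k = {x\<in>{0<..<1::real}. (stau ^^ k) x \<in> Ht (sqrt (real k + 2))}" for k
  have meas: "B k \<in> sets borel" for k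
  proof -
    have "(stau ^^ k) -` Ht (sqrt (real k + 2)) \<in> sets borel"
      using measurable_sets[OF stau_pow_meas Ht_meas] by simp
    then have "{0<..<1::real} \<inter> (stau ^^ k) -` Ht (sqrt (real k + 2)) \<in> sets borel" by simp
    moreover have "B k = {0<..<1::real} \<inter> (stau ^^ k) -` Ht (sqrt (real k + 2))" unfolding B_def by auto
    ultimately show ?thesis by simp
  qed
  have bnd: "emeasure lborel (B k) \<le> ennreal (3 / sqrt (real k + 2))" for k
  proof -
    have t: "sqrt (real k + 2) \<ge> 1" by simp
    have "emeasure lborel {y\<in>{0<..<1 / real (1::nat)}. (stau ^^ k) y \<in> Ht (sqrt (real k + 2))}
        \<le> ennreal (3 / sqrt (real k + 2) / real (1::nat))"
      by (rule tail_bound[OF t]) simp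
    then show ?thesis unfolding B_def by simp
  qed
  have AE1: "AE x in lborel. \<exists>\<^sub>F k in sequentially. x \<notin> B k"
    by (rule freq_AE[OF meas _ lim5]) (use bnd in simp)
  show ?thesis using AE1
  proof eventually_elim
    case (elim x)
    show ?case
    proof (intro impI)
      assume x: "x \<in> Om"
      have fr: "\<forall>M. \<exists>k\<ge>M. x \<notin> B k" using elim unfolding frequently_sequentially .
      define c where "c N = ereal ((ln (sqrt (real N)) - ln (real N)) / ln (ln (real N)))" for N :: nat
      have "liminf (\<lambda>n. ereal ((ln (sengel_R n x) - ln (real n)) / ln (ln (real n)))) \<le> -\<infinity>"
      proof (rule liminf_le_lim[of _ c])
        show "c \<longlonglongrightarrow> -\<infinity>"
          using iffD2[OF ereal_tendsto_simps2(3) lim1] unfolding c_def comp_def .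
        show "\<forall>M. \<exists>n\<ge>M. ereal ((ln (sengel_R n x) - ln (real n)) / ln (ln (real n))) \<le> c n"
        proof
          fix M :: nat
          obtain k where k: "k \<ge> M + 4" "x \<notin> B k" using fr by blast
          define N where "N = k + 2"
          have N3: "N \<ge> 4" and NM: "N \<ge> M" using k unfolding N_def by auto
          have "\<not> (stau ^^ k) x \<in> Ht (sqrt (real k + 2))" using k(2) om_01[OF x] unfolding B_def by auto
          then have h: "sg ((stau ^^ Suc k) x) \<le> sqrt (real N) * sg ((stau ^^ k) x)"
            unfolding Ht_def N_def by (simp add: add.commute)
          have pos: "sg ((stau ^^ k) x) > 0" using sg_om_pos[OF x] .
          have R: "sengel_R N x = sg ((stau ^^ Suc k) x) / sg ((stau ^^ k) x)"
            using sengel_R_om[OF x, of N] unfolding N_def by simp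
          have RN: "sengel_R N x \<le> sqrt (real N)" unfolding R using h pos by (simp add: divide_le_eq)
          have "ln (sengel_R N x) \<le> ln (sqrt (real N))"
            using RN sengel_R_pos[OF x, of N] by (rule ln_mono)
          then have "(ln (sengel_R N x) - ln (real N)) / ln (ln (real N)) \<le> (ln (sqrt (real N)) - ln (real N)) / ln (ln (real N))"
            using lnln_pos[OF N3] by (intro divide_right_mono) auto
          then show "\<exists>n\<ge>M. ereal ((ln (sengel_R n x) - ln (real n)) / ln (ln (real n))) \<le> c n"
            using NM unfolding c_def by auto
        qed
      qed
      then show "liminf (\<lambda>n. ereal ((ln (sengel_R n x) - ln (real n)) / ln (ln (real n)))) = -\<infinity>"
        by simp
    qed
  qed
qed


lemma lim2: "(\<lambda>N::nat. (ln (real N * ln (ln (real N))) - ln (real N)) / ln (ln (real N))) \<longlonglongrightarrow> 0"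
  by real_asymp
lemma lim3: "(\<lambda>N::nat. 1 / (real N * ln (ln (real N)) - 1) + 3 * real N / (real N * ln (ln (real N)))) \<longlonglongrightarrow> 0"
  by real_asymp
lemma lim6: "filterlim (\<lambda>N::nat. real N * ln (ln (real N))) at_top sequentially"
  by real_asymp

lemma first_digit_bound:
  assumes t: "t > 1"
  shows "emeasure lborel {x\<in>{0<..<1::real}. t < sg x} \<le> ennreal (1 / (t - 1))"
proof -
  have sub: "{x\<in>{0<..<1::real}. t < sg x} \<subseteq> {0<..<1 / (t - 1)}"
  proof
    fix z assume z: "z \<in> {x\<in>{0<..<1::real}. t < sg x}"
    then have zp: "z > 0" by auto
    have "t < 1 / z + 1" using z sg_lt[of z] by auto
    then have "t - 1 < 1 / z" by linarith
    then have "z < 1 / (t - 1)" using zp t by (simp add: field_simps)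
    then show "z \<in> {0<..<1 / (t - 1)}" using zp by auto
  qed
  have "emeasure lborel {x\<in>{0<..<1::real}. t < sg x} \<le> emeasure lborel {0<..<1 / (t - 1)}"
    by (rule emeasure_mono[OF sub]) simp
  also have "\<dots> = ennreal (1 / (t - 1))" using t by simp
  finally show ?thesis .
qed

lemma sengel_M_ge:
  assumes "1 \<le> k" "k \<le> n"
  shows "sengel_R k x \<le> sengel_M n x"
  unfolding sengel_M_def using assms by (intro Max_ge) auto

lemma sengel_M_pos:
  assumes x: "x \<in> Om" and n: "n \<ge> 1"
  shows "sengel_M n x > 0"
  using sengel_M_ge[of 1 n x] n sengel_R_pos[OF x, of 1] by linarith

lemma partII: "AE x in lborel. x \<in> Om \<longrightarrow>
   liminf (\<lambda>n. ereal ((ln (sengel_M n x) - ln (real n)) / ln (ln (real n)))) \<le> 0"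
proof -
  define t where "t N = real N * ln (ln (real N))" for N :: nat
  define B where "B N = {x\<in>{0<..<1::real}. t N < sg x} \<union> (\<Union>k<N. {x\<in>{0<..<1::real}. (stau ^^ k) x \<in> Ht (t N)})" for N
  have mk: "{x\<in>{0<..<1::real}. (stau ^^ k) x \<in> Ht s} \<in> sets borel" for k s
  proof -
    have "(stau ^^ k) -` Ht s \<in> sets borel"
      using measurable_sets[OF stau_pow_meas Ht_meas] by simp
    then have "{0<..<1::real} \<inter> (stau ^^ k) -` Ht s \<in> sets borel" by simp
    moreover have "{x\<in>{0<..<1::real}. (stau ^^ k) x \<in> Ht s} = {0<..<1::real} \<inter> (stau ^^ k) -` Ht s" by auto
    ultimately show ?thesis by simp
  qed
  have m1: "{x\<in>{0<..<1::real}. s < sg x} \<in> sets borel" for s by measurable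
  have mU: "(\<Union>k<N. {x\<in>{0<..<1::real}. (stau ^^ k) x \<in> Ht (t N)}) \<in> sets borel" for N
    using mk by (intro sets.countable_UN'') auto
  have meas: "B N \<in> sets borel" for N unfolding B_def using m1 mU by (intro sets.Un)
  have ev2: "eventually (\<lambda>N. 2 \<le> t N) sequentially"
    using lim6 unfolding t_def filterlim_at_top by blast
  have bnd: "eventually (\<lambda>N. emeasure lborel (B N) \<le> ennreal (1 / (t N - 1) + 3 * real N / t N)) sequentially"
    using ev2
  proof eventually_elim
    case (elim N)
    have t1: "t N \<ge> 1" "t N > 1" using elim by auto
    have "emeasure lborel (B N) \<le> emeasure lborel {x\<in>{0<..<1::real}. t N < sg x}
        + emeasure lborel (\<Union>k<N. {x\<in>{0<..<1::real}. (stau ^^ k) x \<in> Ht (t N)})"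
      unfolding B_def by (rule emeasure_subadditive) (use m1 mU in auto)
    also have "\<dots> \<le> ennreal (1 / (t N - 1)) + (\<Sum>k<N. emeasure lborel {x\<in>{0<..<1::real}. (stau ^^ k) x \<in> Ht (t N)})"
      by (intro add_mono first_digit_bound[OF t1(2)] emeasure_subadditive_finite) (use mk in auto)
    also have "\<dots> \<le> ennreal (1 / (t N - 1)) + (\<Sum>k<N. ennreal (3 / t N))"
    proof (intro add_left_mono sum_mono)
      fix k
      have "emeasure lborel {y\<in>{0<..<1 / real (1::nat)}. (stau ^^ k) y \<in> Ht (t N)} \<le> ennreal (3 / t N / real (1::nat))"
        by (rule tail_bound[OF t1(1)]) simp
      then show "emeasure lborel {x\<in>{0<..<1::real}. (stau ^^ k) x \<in> Ht (t N)} \<le> ennreal (3 / t N)" by simp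
    qed
    also have "\<dots> = ennreal (1 / (t N - 1) + 3 * real N / t N)"
    proof -
      have "(\<Sum>k<N. ennreal (3 / t N)) = ennreal (\<Sum>k<N. 3 / t N)"
        using t1 by (intro sum_ennreal) auto
      also have "(\<Sum>k<N. 3 / t N) = 3 * real N / t N" by simp
      finally have s: "(\<Sum>k<N. ennreal (3 / t N)) = ennreal (3 * real N / t N)" .
      have "ennreal (1 / (t N - 1) + 3 * real N / t N) = ennreal (1 / (t N - 1)) + ennreal (3 * real N / t N)"
        using t1 by (intro ennreal_plus) auto
      then show ?thesis unfolding s by simp
    qed
    finally show ?case .
  qed
  have AE1: "AE x in lborel. \<exists>\<^sub>F k in sequentially. x \<notin> B k"
    by (rule freq_AE[OF meas bnd]) (use lim3 in \<open>simp add: t_def\<close>)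
  show ?thesis using AE1
  proof eventually_elim
    case (elim x)
    show ?case
    proof (intro impI)
      assume x: "x \<in> Om"
      have fr: "\<forall>M. \<exists>k\<ge>M. x \<notin> B k" using elim unfolding frequently_sequentially .
      define c where "c N = ereal ((ln (t N) - ln (real N)) / ln (ln (real N)))" for N :: nat
      show "liminf (\<lambda>n. ereal ((ln (sengel_M n x) - ln (real n)) / ln (ln (real n)))) \<le> 0"
      proof (rule liminf_le_lim[of _ c])
        show "c \<longlonglongrightarrow> 0" unfolding c_def t_def using lim2 by (simp add: zero_ereal_def)
        show "\<forall>M. \<exists>n\<ge>M. ereal ((ln (sengel_M n x) - ln (real n)) / ln (ln (real n))) \<le> c n"
        proof
          fix M :: nat
          obtain N where N: "N \<ge> M + 4" "x \<notin> B N" using fr by blast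
          have N4: "N \<ge> 4" and NM: "N \<ge> M" using N by auto
          have x01: "x \<in> {0<..<1}" using om_01[OF x] .
          have tpos: "t N > 0" unfolding t_def using lnln_pos[OF N4] N4 by simp
          have Rle: "sengel_R k x \<le> t N" if k: "k \<in> {1..N}" for k
          proof (cases "k = 1")
            case True
            have "\<not> t N < sg x" using N(2) x01 unfolding B_def by auto
            then show ?thesis using True sengel_R_om[OF x, of 1] by simp
          next
            case False
            then have k2: "k \<ge> 2" using k by auto
            define i where "i = k - 2"
            have iN: "i < N" using k k2 unfolding i_def by auto
            have "\<not> (stau ^^ i) x \<in> Ht (t N)" using N(2) x01 iN unfolding B_def by auto
            then have h: "sg ((stau ^^ Suc i) x) \<le> t N * sg ((stau ^^ i) x)"
              unfolding Ht_def by simp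
            have pos: "sg ((stau ^^ i) x) > 0" using sg_om_pos[OF x] .
            have R: "sengel_R k x = sg ((stau ^^ Suc i) x) / sg ((stau ^^ i) x)"
              using sengel_R_om[OF x, of k] k2 unfolding i_def by (simp add: Suc_diff_Suc numeral_2_eq_2)
            show ?thesis unfolding R using h pos by (simp add: divide_le_eq)
          qed
          have "sengel_M N x \<le> t N"
            unfolding sengel_M_def using Rle N4 by (intro Max.boundedI) auto
          then have "ln (sengel_M N x) \<le> ln (t N)"
            using sengel_M_pos[OF x, of N] N4 by (intro ln_mono) auto
          then have "(ln (sengel_M N x) - ln (real N)) / ln (ln (real N)) \<le> (ln (t N) - ln (real N)) / ln (ln (real N))"
            using lnln_pos[OF N4] by (intro divide_right_mono) auto
          then show "\<exists>n\<ge>M. ereal ((ln (sengel_M n x) - ln (real n)) / ln (ln (real n))) \<le> c n"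
            using NM unfolding c_def by auto
        qed
      qed
    qed
  qed
qed

definition phi :: "nat \<Rightarrow> real" where "phi i = 24 * ln (real i + 1)"
definition mm :: "nat \<Rightarrow> real" where "mm i = 2 ^ (i + 1) / phi i"

lemma exp_bound:
  assumes m: "m \<ge> 1"
  shows "(1 - 1 / (3 * m)) ^ n \<le> exp (- (real n / (3 * m)))"
proof -
  have a: "0 \<le> 1 - 1 / (3 * m)" using m by (simp add: field_simps)
  have "1 - 1 / (3 * m) \<le> exp (- (1 / (3 * m)))" using exp_ge_add_one_self[of "- (1 / (3 * m))"] by simp
  then have "(1 - 1 / (3 * m)) ^ n \<le> exp (- (1 / (3 * m))) ^ n" using a by (rule power_mono)
  also have "\<dots> = exp (real n * (- (1 / (3 * m))))" by (rule exp_of_nat_mult[symmetric])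
  also have "\<dots> = exp (- (real n / (3 * m)))" by simp
  finally show ?thesis .
qed

lemma measure_bound_main:
  assumes m1: "mm i \<ge> 1"
  shows "(1 - 1 / (3 * mm i)) ^ (2 ^ i - 1) \<le> 1 / (real i + 1) ^ 2"
proof -
  have i1: "i \<ge> 1"
  proof (rule ccontr)
    assume "\<not> i \<ge> 1" then have "i = 0" by simp
    then have "mm i = 0" unfolding mm_def phi_def by simp
    then show False using m1 by simp
  qed
  define P :: real where "P = 2 ^ i"
  have P2: "P \<ge> 2" unfolding P_def using i1 by (metis power_increasing power_one_right numeral_le_iff one_le_numeral semiring_norm(69) le_numeral_extra(4))
  have ph0: "phi i > 0" unfolding phi_def using i1 by simp
  have mmP: "mm i = 2 * P / phi i" unfolding mm_def P_def by simp
  have rn: "real (2 ^ i - 1 :: nat) = P - 1"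
    unfolding P_def by (simp add: of_nat_diff)
  have "(1 - 1 / (3 * mm i)) ^ (2 ^ i - 1) \<le> exp (- (real (2 ^ i - 1 :: nat) / (3 * mm i)))"
    by (rule exp_bound[OF m1])
  also have "\<dots> \<le> exp (- (phi i / 12))"
  proof -
    have "real (2 ^ i - 1 :: nat) / (3 * mm i) = (P - 1) * phi i / (6 * P)"
      unfolding rn mmP using ph0 P2 by (simp add: field_simps)
    moreover have "phi i / 12 \<le> (P - 1) * phi i / (6 * P)"
    proof -
      have "P / 2 \<le> P - 1" using P2 by simp
      then have "(P / 2) * phi i \<le> (P - 1) * phi i" using ph0 by (intro mult_right_mono) auto
      then have "(P / 2) * phi i / (6 * P) \<le> (P - 1) * phi i / (6 * P)" using P2 by (intro divide_right_mono) auto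
      moreover have "(P / 2) * phi i / (6 * P) = phi i / 12" using P2 by (simp add: field_simps)
      ultimately show ?thesis by metis
    qed
    ultimately show ?thesis by simp
  qed
  also have "\<dots> = 1 / (real i + 1) ^ 2"
  proof -
    have "phi i / 12 = real (2::nat) * ln (real i + 1)" unfolding phi_def by simp
    then have "exp (phi i / 12) = exp (ln (real i + 1)) ^ 2" by (simp only: exp_of_nat_mult)
    also have "\<dots> = (real i + 1) ^ 2" by simp
    finally show ?thesis by (simp add: exp_minus field_simps)
  qed
  finally show ?thesis .
qed

lemma summable_sq: "summable (\<lambda>i::nat. 1 / (real i + 1) ^ 2)"
proof -
  have "summable (\<lambda>n::nat. inverse (real n ^ 2))" by (rule inverse_power_summable) simp
  then have "summable (\<lambda>n::nat. inverse (real (Suc n) ^ 2))" by (subst summable_Suc_iff)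
  then show ?thesis by (simp add: field_simps add.commute)
qed


lemma lim4: "(\<lambda>n::nat. - ln (24 * ln (2 * ln (real n) + 1)) / ln (ln (real n))) \<longlonglongrightarrow> 0"
  by real_asymp

lemma partIII: "AE x in lborel. x \<in> Om \<longrightarrow>
   0 \<le> liminf (\<lambda>n. ereal ((ln (sengel_M n x) - ln (real n)) / ln (ln (real n))))"
proof -
  define C where "C i = {x\<in>{0<..<1::real}. stau x \<in> Ech (mm i) (2 ^ i - 1) (sg x)}" for i
  define B where "B i = (if mm i \<ge> 1 then C i else {})" for i
  have mC: "C i \<in> sets borel" for i
  proof -
    have "{y. stau y \<in> Ech (mm i) (2 ^ i - 1) (sg y)} \<in> sets borel" by (rule meas_dep) (rule Ech_meas)
    then have "{0<..<1::real} \<inter> {y. stau y \<in> Ech (mm i) (2 ^ i - 1) (sg y)} \<in> sets borel" by simp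
    moreover have "C i = {0<..<1::real} \<inter> {y. stau y \<in> Ech (mm i) (2 ^ i - 1) (sg y)}" unfolding C_def by auto
    ultimately show ?thesis by simp
  qed
  have meas: "B i \<in> sets lborel" for i unfolding B_def using mC by simp
  have ebnd: "emeasure lborel (B i) \<le> ennreal (1 / (real i + 1) ^ 2)" for i
  proof (cases "mm i \<ge> 1")
    case True
    have "emeasure lborel (B i) \<le> ennreal ((1 - 1 / (3 * mm i)) ^ (2 ^ i - 1))"
      unfolding B_def C_def using True B_main[OF True] by simp
    also have "\<dots> \<le> ennreal (1 / (real i + 1) ^ 2)"
      by (rule ennreal_leI) (rule measure_bound_main[OF True])
    finally show ?thesis .
  next
    case False then show ?thesis unfolding B_def by simp
  qed
  have fin: "emeasure lborel (B i) < \<infinity>" for i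
    using ebnd[of i] by (metis ennreal_less_top infinity_ennreal_def le_less_trans)
  have mbnd: "measure lborel (B i) \<le> 1 / (real i + 1) ^ 2" for i
  proof -
    have "ennreal (measure lborel (B i)) \<le> ennreal (1 / (real i + 1) ^ 2)"
      using ebnd[of i] fin[of i] by (simp add: emeasure_eq_ennreal_measure)
    then show ?thesis by (simp add: ennreal_le_iff)
  qed
  have summ: "summable (\<lambda>i. measure lborel (B i))"
    by (rule summable_comparison_test'[OF summable_sq]) (use mbnd in simp)
  have AE1: "AE x in lborel. eventually (\<lambda>i. x \<in> space lborel - B i) sequentially"
    by (rule borel_cantelli_AE1) (use meas fin summ in auto)
  show ?thesis using AE1
  proof eventually_elim
    case (elim x)
    show ?case
    proof (intro impI)
      assume x: "x \<in> Om"
      have x01: "x \<in> {0<..<1}" using om_01[OF x] .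
      obtain I where I: "\<And>i. i \<ge> I \<Longrightarrow> x \<notin> B i" using elim unfolding eventually_sequentially by auto
      have G: "mm i \<le> sengel_M (2 ^ i) x" if i: "i \<ge> I" for i
      proof (cases "mm i \<ge> 1")
        case False
        have "sengel_R 1 x \<le> sengel_M (2 ^ i) x" by (rule sengel_M_ge) auto
        moreover have "sengel_R 1 x \<ge> 2" using sengel_R_om[OF x, of 1] sg_om[OF x, of 0] by simp
        ultimately show ?thesis using False by linarith
      next
        case True
        have "x \<notin> C i" using I[OF i] True unfolding B_def by simp
        then have "stau x \<notin> Ech (mm i) (2 ^ i - 1) (sg x)" using x01 unfolding C_def by simp
        then obtain i' where i': "i' < 2 ^ i - 1" "\<not> sg ((stau ^^ Suc i') x) < mm i * sg ((stau ^^ i') x)"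
          using chain_imp[of "2 ^ i - 1" x "mm i"] by blast
        have pos: "sg ((stau ^^ i') x) > 0" using sg_om_pos[OF x] .
        have R: "sengel_R (i' + 2) x = sg ((stau ^^ Suc i') x) / sg ((stau ^^ i') x)"
          using sengel_R_om[OF x, of "i' + 2"] by simp
        have "mm i \<le> sengel_R (i' + 2) x" unfolding R using i'(2) pos by (simp add: le_divide_eq)
        also have "\<dots> \<le> sengel_M (2 ^ i) x" by (rule sengel_M_ge) (use i'(1) in auto)
        finally show ?thesis .
      qed
      define c where "c n = - ln (24 * ln (2 * ln (real n) + 1)) / ln (ln (real n))" for n :: nat
      have ev: "eventually (\<lambda>n. c n \<le> (ln (sengel_M n x) - ln (real n)) / ln (ln (real n))) sequentially"
        unfolding eventually_sequentially
      proof (intro exI[of _ "2 ^ I + 16"] allI impI)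
        fix n :: nat assume n: "2 ^ I + 16 \<le> n"
        have n1: "n \<ge> 1" and n4: "n \<ge> 4" using n by auto
        obtain i where i: "2 ^ i \<le> n" "n < 2 ^ (i + 1)" using ex_power_ivl1[of 2 n] n1 by auto
        have iI: "i \<ge> I"
        proof (rule ccontr)
          assume "\<not> i \<ge> I"
          then have "i + 1 \<le> I" by simp
          then have "(2::nat) ^ (i + 1) \<le> 2 ^ I" by (rule power_increasing) simp
          then show False using i n by linarith
        qed
        have i1: "i \<ge> 1"
        proof (rule ccontr)
          assume "\<not> i \<ge> 1" then have "i = 0" by simp
          then show False using i n by simp
        qed
        have ph0: "phi i > 0" unfolding phi_def using i1 by simp
        have Mi: "mm i \<le> sengel_M (2 ^ i) x" using G[OF iI] .
        have mono: "sengel_M (2 ^ i) x \<le> sengel_M n x"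
          unfolding sengel_M_def using i(1) by (intro Max_mono) auto
        have "real n / phi i \<le> mm i"
        proof -
          have "real n \<le> 2 ^ (i + 1)" using i(2) by (metis less_imp_le of_nat_le_iff of_nat_numeral of_nat_power)
          then show ?thesis unfolding mm_def using ph0 by (intro divide_right_mono) auto
        qed
        then have Mn: "real n / phi i \<le> sengel_M n x" using Mi mono by linarith
        have npos: "real n / phi i > 0" using n1 ph0 by simp
        have "ln (real n / phi i) \<le> ln (sengel_M n x)" using Mn npos by (rule ln_mono)
        then have L1: "ln (real n) - ln (phi i) \<le> ln (sengel_M n x)" using n1 ph0 by (simp add: ln_div)
        have "real i * ln 2 \<le> ln (real n)"
        proof -
          have "ln ((2::real) ^ i) \<le> ln (real n)"
            using i(1) by (intro ln_mono) (metis of_nat_le_iff of_nat_numeral of_nat_power, simp)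
          then show ?thesis by (simp add: ln_realpow)
        qed
        moreover have "real i * (2 / 3) \<le> real i * ln 2"
          using ln2_ge_two_thirds by (intro mult_left_mono) auto
        moreover have "ln (real n) \<ge> 0" using n1 by simp
        ultimately have "real i \<le> 2 * ln (real n)" by linarith
        then have "phi i \<le> 24 * ln (2 * ln (real n) + 1)"
          unfolding phi_def using ln_mono[of "real i + 1" "2 * ln (real n) + 1"] by simp
        then have "ln (phi i) \<le> ln (24 * ln (2 * ln (real n) + 1))" using ph0 by (rule ln_mono)
        then have "- ln (24 * ln (2 * ln (real n) + 1)) \<le> ln (sengel_M n x) - ln (real n)" using L1 by linarith
        then show "c n \<le> (ln (sengel_M n x) - ln (real n)) / ln (ln (real n))"
          unfolding c_def using lnln_pos[OF n4] by (intro divide_right_mono) auto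
      qed
      show "0 \<le> liminf (\<lambda>n. ereal ((ln (sengel_M n x) - ln (real n)) / ln (ln (real n))))"
        unfolding le_Liminf_iff
      proof (intro allI impI)
        fix y :: ereal assume y: "y < 0"
        have "(\<lambda>n. ereal (c n)) \<longlonglongrightarrow> ereal 0" unfolding c_def by (rule tendsto_ereal[OF lim4])
        moreover have "y < ereal 0" using y by (simp add: zero_ereal_def)
        ultimately have e1: "eventually (\<lambda>n. y < ereal (c n)) sequentially" by (rule order_tendstoD(1))
        show "eventually (\<lambda>n. y < ereal ((ln (sengel_M n x) - ln (real n)) / ln (ln (real n)))) sequentially"
          using e1 ev by eventually_elim (auto intro: less_le_trans)
      qed
    qed
  qed
qed


theorem theorem1p8:
  shows "AE x in lborel. x \<in> {0<..<1::real} \<longrightarrow>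
     liminf (\<lambda>n. ereal ((ln (sengel_R n x) - ln (real n)) / ln (ln (real n)))) = -\<infinity> \<and>
     liminf (\<lambda>n. ereal ((ln (sengel_M n x) - ln (real n)) / ln (ln (real n)))) = 0"
proof -
  have Q: "AE x in lborel. x \<notin> \<rat>"
    by (rule AE_not_in[OF countable_imp_null_set_lborel[OF countable_rat]])
  show ?thesis using partI partII partIII Q
  proof eventually_elim
    case (elim x)
    show ?case
    proof (intro impI)
      assume "x \<in> {0<..<1::real}"
      then have x: "x \<in> Om" using elim(4) unfolding Om_def by auto
      show "liminf (\<lambda>n. ereal ((ln (sengel_R n x) - ln (real n)) / ln (ln (real n)))) = -\<infinity> \<and>
     liminf (\<lambda>n. ereal ((ln (sengel_M n x) - ln (real n)) / ln (ln (real n)))) = 0"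
        using elim(1-3) x by (auto intro: antisym)
    qed
  qed
qed


end
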